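(* Let $G=(V,E,L)$ be a graph with loops, let $\{i,i\}\in L^+$ and let $M_1\subset M_2\subseteq N(i)$ with $i\in M_1$. For $k=1,2$ let $\Sigma(M_k)$ denote the system $$z_{ii}\ \ge\sum_{J\subseteq M_k:\, i\in J}\frac{\big(\ell_{d_k}(J,M_k\setminus J)\big)^2}{\ell_{d_k-1}(J\setminus\{i\},M_k\setminus J)},\qquad \ell_{d_k}(J,M_k\setminus J)\ge 0\quad\forall J\subseteq M_k,$$ with $d_k:=|M_k|$, in the variables $z_{ii}$ and $z_S$, $S\subseteq M_k$, $S\neq\emptyset$. Then the system $\Sigma(M_1)$ is implied by $\Sigma(M_2)$: every assignment of the variables $z_{ii}$, $z_S$ ($S\subseteq M_2$) satisfying $\Sigma(M_2)$ satisfies $\Sigma(M_1)$ when restricted to the variables $z_{ii}$, $z_S$ ($S\subseteq M_1$).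
   Context: A graph with loops is $G=(V,E,L)$: $V$ finite node set, $E$ a set of unordered pairs of distinct nodes, $L$ a set of loops $\{i,i\}$ partitioned as $L=L^-\cup L^+$ (minus/plus loops). For a plus loop $\{i,i\}$, $N(i):=\{j\in V:\{i,j\}\in E\cup L\}$ (so $i\in N(i)$). Variables: $z_\emptyset:=1$, $z_{\{k\}}:=z_k$, and for $|S|\ge2$ a variable $z_S$ (equal to the edge variable when $S\in E$, auxiliary otherwise); the loop variable $z_{ii}$ is separate. For disjoint $J_1,J_2$ with $|J_1\cup J_2|=d$, $\ell_d(J_1,J_2):=\sum_{t\subseteq J_2}(-1)^{|t|}z_{J_1\cup t}$. Each $u^2/v$ denotes the closed perspective: $u^2/v$ if $v>0$, $0$ if $u=v=0$, $+\infty$ if $u\neq0,v=0$. *)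

theory Defs
  imports "HOL-Analysis.Analysis"
begin

text \<open>A graph with loops (V,E,L), L = Lminus \<union> Lplus. A loop {i,i} is represented
  by the node i; so Lminus, Lplus are disjoint sets of nodes.\<close>
definition graph_with_loops :: "'a set \<Rightarrow> 'a set set \<Rightarrow> 'a set \<Rightarrow> 'a set \<Rightarrow> bool" where
  "graph_with_loops V E Lminus Lplus \<longleftrightarrow>
     finite V \<and> (\<forall>e\<in>E. \<exists>a b. a \<in> V \<and> b \<in> V \<and> a \<noteq> b \<and> e = {a, b})
     \<and> Lminus \<subseteq> V \<and> Lplus \<subseteq> V \<and> Lminus \<inter> Lplus = {}"

definition nbhd :: "'a set \<Rightarrow> 'a set set \<Rightarrow> 'a set \<Rightarrow> 'a set \<Rightarrow> 'a \<Rightarrow> 'a set" where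
  "nbhd V E Lminus Lplus i = {j \<in> V. {i, j} \<in> E \<or> (j = i \<and> i \<in> Lminus \<union> Lplus)}"

text \<open>ell z J1 J2 = sum over t \<subseteq> J2 of (-1)^|t| z_(J1 \<union> t); the index d = |J1 \<union> J2|
  is only a label and therefore not an argument.\<close>
definition ell :: "('a set \<Rightarrow> real) \<Rightarrow> 'a set \<Rightarrow> 'a set \<Rightarrow> real" where
  "ell z J1 J2 = (\<Sum>t\<in>Pow J2. (-1) ^ card t * z (J1 \<union> t))"

text \<open>Closed perspective u^2/v (value +\<infinity> also for v < 0, the usual convention;
  this case cannot occur under the constraints of the system).\<close>
definition persp :: "real \<Rightarrow> real \<Rightarrow> ereal" where
  "persp u v = (if v > 0 then ereal (u^2 / v) else if u = 0 \<and> v = 0 then 0 else \<infinity>)"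

definition Sigma_sys :: "('a set \<Rightarrow> real) \<Rightarrow> real \<Rightarrow> 'a \<Rightarrow> 'a set \<Rightarrow> bool" where
  "Sigma_sys z zii i M \<longleftrightarrow>
     ereal zii \<ge> (\<Sum>J\<in>{J. J \<subseteq> M \<and> i \<in> J}. persp (ell z J (M - J)) (ell z (J - {i}) (M - J)))
     \<and> (\<forall>J. J \<subseteq> M \<longrightarrow> ell z J (M - J) \<ge> 0)"

end

theory Submission
  imports Defs
begin

lemma ell_step:
  assumes "c \<notin> B" "finite B"
  shows "ell z A B = ell z A (insert c B) + ell z (insert c A) B"
proof -
  have inj: "inj_on (insert c) (Pow B)" using assms(1)
    by (smt (verit, ccfv_threshold) PowD inj_on_def insert_ident subset_iff)
  have disj: "Pow B \<inter> insert c ` Pow B = {}" using assms(1) by auto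
  have "ell z A (insert c B) = (\<Sum>t\<in>Pow B. (-1) ^ card t * z (A \<union> t))
      + (\<Sum>t\<in>insert c ` Pow B. (-1) ^ card t * z (A \<union> t))"
    unfolding ell_def Pow_insert using assms disj
    by (simp add: sum.union_disjoint)
  also have "(\<Sum>t\<in>insert c ` Pow B. (-1) ^ card t * z (A \<union> t))
      = (\<Sum>t\<in>Pow B. (-1) ^ card (insert c t) * z (A \<union> insert c t))"
    using inj by (simp add: sum.reindex)
  also have "\<dots> = (\<Sum>t\<in>Pow B. - ((-1) ^ card t * z (insert c A \<union> t)))"
  proof (rule sum.cong)
    fix t assume "t \<in> Pow B"
    then have "c \<notin> t" "finite t" using assms finite_subset by auto
    then show "(-1) ^ card (insert c t) * z (A \<union> insert c t) = - ((-1) ^ card t * z (insert c A \<union> t))"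
      by simp
  qed simp
  also have "\<dots> = - ell z (insert c A) B" unfolding ell_def by (simp add: sum_negf)
  finally show ?thesis unfolding ell_def by simp
qed

lemma ell_split:
  assumes "finite C" "finite B" "C \<inter> B = {}"
  shows "ell z A B = (\<Sum>K\<in>Pow C. ell z (A \<union> K) (B \<union> (C - K)))"
  using assms
proof (induction C arbitrary: A B rule: finite_induct)
  case empty
  then show ?case by simp
next
  case (insert c C)
  have inj: "inj_on (insert c) (Pow C)" using insert(2)
    by (smt (verit, ccfv_threshold) PowD inj_on_def insert_ident subset_iff)
  have disj: "Pow C \<inter> insert c ` Pow C = {}" using insert(2) by auto
  have "(\<Sum>K\<in>Pow (insert c C). ell z (A \<union> K) (B \<union> (insert c C - K)))
     = (\<Sum>K\<in>Pow C. ell z (A \<union> K) (B \<union> (insert c C - K)))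
       + (\<Sum>K\<in>insert c ` Pow C. ell z (A \<union> K) (B \<union> (insert c C - K)))"
    unfolding Pow_insert using insert disj by (simp add: sum.union_disjoint)
  also have "(\<Sum>K\<in>insert c ` Pow C. ell z (A \<union> K) (B \<union> (insert c C - K)))
      = (\<Sum>K\<in>Pow C. ell z (A \<union> insert c K) (B \<union> (insert c C - insert c K)))"
    using inj by (simp add: sum.reindex)
  also have "(\<Sum>K\<in>Pow C. ell z (A \<union> K) (B \<union> (insert c C - K)))
       + (\<Sum>K\<in>Pow C. ell z (A \<union> insert c K) (B \<union> (insert c C - insert c K)))
     = (\<Sum>K\<in>Pow C. ell z (A \<union> K) (B \<union> (C - K)))"
    unfolding sum.distrib[symmetric]
  proof (rule sum.cong)
    fix K assume K: "K \<in> Pow C"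
    have e1: "B \<union> (insert c C - K) = insert c (B \<union> (C - K))" using K insert by auto
    have e2: "B \<union> (insert c C - insert c K) = B \<union> (C - K)" using K insert by auto
    have e3: "A \<union> insert c K = insert c (A \<union> K)" by auto
    have "c \<notin> B \<union> (C - K)" using insert by auto
    moreover have "finite (B \<union> (C - K))" using insert by auto
    ultimately show "ell z (A \<union> K) (B \<union> (insert c C - K)) + ell z (A \<union> insert c K) (B \<union> (insert c C - insert c K))
        = ell z (A \<union> K) (B \<union> (C - K))"
      unfolding e1 e2 e3 using ell_step by metis
  qed simp
  also have "\<dots> = ell z A B" using insert by (intro insert.IH[symmetric]) auto
  finally show ?case by simp
qed

lemma persp_nonneg: "persp u v \<ge> 0"
  unfolding persp_def by auto

lemma real_persp_ineq:
  fixes a b c d :: real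
  assumes "c > 0" "d > 0"
  shows "(a+b)^2/(c+d) \<le> a^2/c + b^2/d"
proof -
  have "(a+b)^2 * (c*d) \<le> (a^2*d + b^2*c) * (c+d)"
  proof -
    have "0 \<le> (a*d - b*c)^2" by simp
    then show ?thesis by (simp add: power2_eq_square algebra_simps)
  qed
  then show ?thesis using assms by (simp add: field_simps)
qed

lemma persp_add: "persp (a+b) (c+d) \<le> persp a c + persp b d"
proof -
  have n1: "persp a c \<ge> 0" "persp b d \<ge> 0" by (rule persp_nonneg)+
  consider "persp a c = \<infinity>" | "persp b d = \<infinity>" | "persp a c \<noteq> \<infinity>" "persp b d \<noteq> \<infinity>" by blast
  then show ?thesis
  proof cases
    case 1 then show ?thesis using n1 by simp
  next
    case 2 then show ?thesis using n1 by simp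
  next
    case 3
    then have h1: "(c > 0) \<or> (a = 0 \<and> c = 0)" and h2: "(d > 0) \<or> (b = 0 \<and> d = 0)"
      unfolding persp_def by (auto split: if_splits)
    show ?thesis
    proof (cases "c > 0")
      case True
      show ?thesis
      proof (cases "d > 0")
        case True
        then show ?thesis using \<open>c > 0\<close> real_persp_ineq[of c d a b] unfolding persp_def by simp
      next
        case False
        then have "b = 0" "d = 0" using h2 by auto
        then show ?thesis using \<open>c > 0\<close> unfolding persp_def by simp
      qed
    next
      case False
      then have "a = 0" "c = 0" using h1 by auto
      then show ?thesis unfolding persp_def by simp
    qed
  qed
qed

lemma persp_sum:
  assumes "finite S"
  shows "persp (\<Sum>k\<in>S. u k) (\<Sum>k\<in>S. v k) \<le> (\<Sum>k\<in>S. persp (u k) (v k))"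
  using assms
proof (induction S rule: finite_induct)
  case empty
  then show ?case by (simp add: persp_def)
next
  case (insert x F)
  then have "persp (\<Sum>k\<in>insert x F. u k) (\<Sum>k\<in>insert x F. v k)
      = persp (u x + (\<Sum>k\<in>F. u k)) (v x + (\<Sum>k\<in>F. v k))" by simp
  also have "\<dots> \<le> persp (u x) (v x) + persp (\<Sum>k\<in>F. u k) (\<Sum>k\<in>F. v k)" by (rule persp_add)
  also have "\<dots> \<le> persp (u x) (v x) + (\<Sum>k\<in>F. persp (u k) (v k))"
    using insert.IH by (rule add_left_mono)
  also have "\<dots> = (\<Sum>k\<in>insert x F. persp (u k) (v k))" using insert by simp
  finally show ?case .
qed

theorem proposition6:
  fixes V :: "'a set" and E :: "'a set set" and Lminus Lplus :: "'a set"
    and i :: 'a and M1 M2 :: "'a set" and z :: "'a set \<Rightarrow> real" and zii :: real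
  assumes "graph_with_loops V E Lminus Lplus"
    and "i \<in> Lplus"
    and "M1 \<subset> M2" and "M2 \<subseteq> nbhd V E Lminus Lplus i" and "i \<in> M1"
    and "z {} = 1"
    and "Sigma_sys z zii i M2"
  shows "Sigma_sys z zii i M1"
proof -
  have finV: "finite V" using assms(1) unfolding graph_with_loops_def by simp
  have "M2 \<subseteq> V" using assms(4) unfolding nbhd_def by blast
  then have finM2: "finite M2" using finV finite_subset by blast
  have finM1: "finite M1" using assms(3) finM2 finite_subset by blast
  define D where "D = M2 - M1"
  have finD: "finite D" using finM2 D_def by simp
  have S2: "ereal zii \<ge> (\<Sum>J\<in>{J. J \<subseteq> M2 \<and> i \<in> J}. persp (ell z J (M2 - J)) (ell z (J - {i}) (M2 - J)))"
    and N2: "\<forall>J. J \<subseteq> M2 \<longrightarrow> ell z J (M2 - J) \<ge> 0"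
    using assms(7) unfolding Sigma_sys_def by auto
  have dec: "ell z A (M1 - J) = (\<Sum>K\<in>Pow D. ell z (A \<union> K) (M2 - (J \<union> K)))"
    if "J \<subseteq> M1" for J A
  proof -
    have "ell z A (M1 - J) = (\<Sum>K\<in>Pow D. ell z (A \<union> K) ((M1 - J) \<union> (D - K)))"
      using finD finM1 by (intro ell_split) (auto simp: D_def)
    also have "\<dots> = (\<Sum>K\<in>Pow D. ell z (A \<union> K) (M2 - (J \<union> K)))"
    proof (rule sum.cong)
      fix K assume "K \<in> Pow D"
      then have "(M1 - J) \<union> (D - K) = M2 - (J \<union> K)" using that assms(3) by (auto simp: D_def)
      then show "ell z (A \<union> K) ((M1 - J) \<union> (D - K)) = ell z (A \<union> K) (M2 - (J \<union> K))" by simp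
    qed simp
    finally show ?thesis .
  qed
  define g where "g J' = persp (ell z J' (M2 - J')) (ell z (J' - {i}) (M2 - J'))" for J'
  have N1: "\<forall>J. J \<subseteq> M1 \<longrightarrow> ell z J (M1 - J) \<ge> 0"
  proof (intro allI impI)
    fix J assume J: "J \<subseteq> M1"
    have "ell z J (M1 - J) = (\<Sum>K\<in>Pow D. ell z (J \<union> K) (M2 - (J \<union> K)))" using dec[OF J] .
    also have "\<dots> \<ge> 0" using J assms(3) by (intro sum_nonneg N2[rule_format]) (auto simp: D_def)
    finally show "ell z J (M1 - J) \<ge> 0" .
  qed
  have perJ: "persp (ell z J (M1 - J)) (ell z (J - {i}) (M1 - J)) \<le> (\<Sum>K\<in>Pow D. g (J \<union> K))"
    if J: "J \<subseteq> M1" "i \<in> J" for J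
  proof -
    have "ell z (J - {i}) (M1 - J) = (\<Sum>K\<in>Pow D. ell z ((J \<union> K) - {i}) (M2 - (J \<union> K)))"
    proof -
      have "ell z (J - {i}) (M1 - J) = (\<Sum>K\<in>Pow D. ell z ((J - {i}) \<union> K) (M2 - (J \<union> K)))"
        using dec[OF J(1)] .
      also have "\<dots> = (\<Sum>K\<in>Pow D. ell z ((J \<union> K) - {i}) (M2 - (J \<union> K)))"
      proof (rule sum.cong)
        fix K assume "K \<in> Pow D"
        then have "(J - {i}) \<union> K = (J \<union> K) - {i}" using assms(5) by (auto simp: D_def)
        then show "ell z ((J - {i}) \<union> K) (M2 - (J \<union> K)) = ell z ((J \<union> K) - {i}) (M2 - (J \<union> K))" by simp
      qed simp
      finally show ?thesis .
    qed
    moreover have "ell z J (M1 - J) = (\<Sum>K\<in>Pow D. ell z (J \<union> K) (M2 - (J \<union> K)))"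
      using dec[OF J(1)] .
    ultimately show ?thesis unfolding g_def
      using persp_sum[of "Pow D" "\<lambda>K. ell z (J \<union> K) (M2 - (J \<union> K))" "\<lambda>K. ell z (J \<union> K - {i}) (M2 - (J \<union> K))"]
      using finD by simp
  qed
  have finJ1: "finite {J. J \<subseteq> M1 \<and> i \<in> J}"
    by (rule finite_subset[of _ "Pow M1"]) (use finM1 in auto)
  have reidx: "(\<Sum>J\<in>{J. J \<subseteq> M1 \<and> i \<in> J}. (\<Sum>K\<in>Pow D. g (J \<union> K)))
      = (\<Sum>J'\<in>{J. J \<subseteq> M2 \<and> i \<in> J}. g J')"
  proof -
    have "(\<Sum>J\<in>{J. J \<subseteq> M1 \<and> i \<in> J}. (\<Sum>K\<in>Pow D. g (J \<union> K)))
        = (\<Sum>p\<in>Sigma {J. J \<subseteq> M1 \<and> i \<in> J} (\<lambda>_. Pow D). g (fst p \<union> snd p))"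
      using finJ1 finD by (subst sum.Sigma) (auto simp: split_def)
    also have "\<dots> = (\<Sum>J'\<in>(\<lambda>p. fst p \<union> snd p) ` Sigma {J. J \<subseteq> M1 \<and> i \<in> J} (\<lambda>_. Pow D). g J')"
    proof (rule sum.reindex[symmetric, unfolded comp_def])
      show "inj_on (\<lambda>p. fst p \<union> snd p) (Sigma {J. J \<subseteq> M1 \<and> i \<in> J} (\<lambda>_. Pow D))"
      proof (rule inj_onI)
        fix p q assume p: "p \<in> Sigma {J. J \<subseteq> M1 \<and> i \<in> J} (\<lambda>_. Pow D)"
          and q: "q \<in> Sigma {J. J \<subseteq> M1 \<and> i \<in> J} (\<lambda>_. Pow D)"
          and e: "fst p \<union> snd p = fst q \<union> snd q"
        have "fst p = (fst p \<union> snd p) \<inter> M1" "fst q = (fst q \<union> snd q) \<inter> M1"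
          using p q by (auto simp: D_def)
        moreover have "snd p = (fst p \<union> snd p) - M1" "snd q = (fst q \<union> snd q) - M1"
          using p q by (auto simp: D_def)
        ultimately show "p = q" using e by (metis prod_eqI)
      qed
    qed
    also have "(\<lambda>p. fst p \<union> snd p) ` Sigma {J. J \<subseteq> M1 \<and> i \<in> J} (\<lambda>_. Pow D) = {J. J \<subseteq> M2 \<and> i \<in> J}"
    proof
      show "(\<lambda>p. fst p \<union> snd p) ` Sigma {J. J \<subseteq> M1 \<and> i \<in> J} (\<lambda>_. Pow D) \<subseteq> {J. J \<subseteq> M2 \<and> i \<in> J}"
        using assms(3) by (auto simp: D_def)
      show "{J. J \<subseteq> M2 \<and> i \<in> J} \<subseteq> (\<lambda>p. fst p \<union> snd p) ` Sigma {J. J \<subseteq> M1 \<and> i \<in> J} (\<lambda>_. Pow D)"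
      proof
        fix J' assume J': "J' \<in> {J. J \<subseteq> M2 \<and> i \<in> J}"
        have "(J' \<inter> M1, J' - M1) \<in> Sigma {J. J \<subseteq> M1 \<and> i \<in> J} (\<lambda>_. Pow D)"
          using J' assms(5) by (auto simp: D_def)
        moreover have "J' = fst (J' \<inter> M1, J' - M1) \<union> snd (J' \<inter> M1, J' - M1)" by auto
        ultimately show "J' \<in> (\<lambda>p. fst p \<union> snd p) ` Sigma {J. J \<subseteq> M1 \<and> i \<in> J} (\<lambda>_. Pow D)"
          by blast
      qed
    qed
    finally show ?thesis .
  qed
  have "(\<Sum>J\<in>{J. J \<subseteq> M1 \<and> i \<in> J}. persp (ell z J (M1 - J)) (ell z (J - {i}) (M1 - J)))
      \<le> (\<Sum>J\<in>{J. J \<subseteq> M1 \<and> i \<in> J}. (\<Sum>K\<in>Pow D. g (J \<union> K)))"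
    using perJ by (intro sum_mono) auto
  also have "\<dots> \<le> ereal zii" using reidx S2 unfolding g_def by simp
  finally show ?thesis unfolding Sigma_sys_def using N1 by simp
qed

end
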